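(* Let $M$ be a finite abelian group, $c\in\hat{M}$ with $c^2=1$, and $i\colon\hat{M}\setminus\{c\}\to\hat{M}\setminus\{1\}$ a bijection with $i(x)=x\,i(x^{-1})$ for all $x\ne c$. Let $F=\hat{M}\sqcup\{0\}$ with multiplication extending that of $\hat{M}$ by $0\cdot x=x\cdot0=0$, and with the operation $\oplus$ for which $0$ is the identity and, for $x,y\ne0$, $x\oplus y=0$ if $x=cy$ and $x\oplus y=x\,i(x/y)^{-1}$ otherwise. Then: (a) $\oplus$ is commutative; (b) $z(x\oplus y)=(zx)\oplus(zy)$ for all $x,y,z\in F$; (c) for every $x\in F$, $x\oplus cx=0$.
   Context: $\hat{M}$ is the Pontryagin dual of $M$, written multiplicatively with identity $1$. *)

theory Defs
  imports "HOL-Algebra.Algebra" Complex_Main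
begin

text \<open>Pontryagin dual of a finite abelian group G: the characters, i.e. homomorphisms
  from G into the unit circle of the complex numbers (taken to be 1 outside the carrier,
  so that they are uniquely determined by their values on the carrier), with
  pointwise multiplication.\<close>

definition dual_chars :: "('a, 'b) monoid_scheme \<Rightarrow> ('a \<Rightarrow> complex) set" where
  "dual_chars G = {\<chi>. (\<forall>x\<in>carrier G. cmod (\<chi> x) = 1)
      \<and> (\<forall>x\<in>carrier G. \<forall>y\<in>carrier G. \<chi> (x \<otimes>\<^bsub>G\<^esub> y) = \<chi> x * \<chi> y)
      \<and> (\<forall>x. x \<notin> carrier G \<longrightarrow> \<chi> x = 1)}"

definition dual :: "('a, 'b) monoid_scheme \<Rightarrow> ('a \<Rightarrow> complex) monoid" where
  "dual G = \<lparr>carrier = dual_chars G, monoid.mult = (\<lambda>\<chi> \<psi> x. \<chi> x * \<psi> x), monoid.one = (\<lambda>x. 1)\<rparr>"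

text \<open>The set F = dual(M) disjoint-union {0}; None plays the role of 0.\<close>

definition Fset :: "('a, 'b) monoid_scheme \<Rightarrow> ('a \<Rightarrow> complex) option set" where
  "Fset G = Some ` carrier (dual G) \<union> {None}"

fun Fmul :: "('a, 'b) monoid_scheme \<Rightarrow> ('a \<Rightarrow> complex) option \<Rightarrow> ('a \<Rightarrow> complex) option
      \<Rightarrow> ('a \<Rightarrow> complex) option" where
  "Fmul G (Some x) (Some y) = Some (x \<otimes>\<^bsub>dual G\<^esub> y)"
| "Fmul G _ _ = None"

fun Foplus :: "('a, 'b) monoid_scheme \<Rightarrow> ('a \<Rightarrow> complex) \<Rightarrow> (('a \<Rightarrow> complex) \<Rightarrow> ('a \<Rightarrow> complex))
      \<Rightarrow> ('a \<Rightarrow> complex) option \<Rightarrow> ('a \<Rightarrow> complex) option \<Rightarrow> ('a \<Rightarrow> complex) option" where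
  "Foplus G c i None y = y"
| "Foplus G c i (Some x) None = Some x"
| "Foplus G c i (Some x) (Some y) =
     (if x = c \<otimes>\<^bsub>dual G\<^esub> y then None
      else Some (x \<otimes>\<^bsub>dual G\<^esub> inv\<^bsub>dual G\<^esub> (i (x \<otimes>\<^bsub>dual G\<^esub> inv\<^bsub>dual G\<^esub> y))))"

end

theory Submission
  imports Defs
begin

lemma dual_comm_group: "comm_group (dual M)"
proof (rule comm_groupI)
  show "\<And>x y. x \<in> carrier (dual M) \<Longrightarrow> y \<in> carrier (dual M) \<Longrightarrow> x \<otimes>\<^bsub>dual M\<^esub> y \<in> carrier (dual M)"
    by (auto simp: dual_def dual_chars_def norm_mult)
  show "\<one>\<^bsub>dual M\<^esub> \<in> carrier (dual M)"
    by (auto simp: dual_def dual_chars_def)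
  show "\<And>x y z. x \<in> carrier (dual M) \<Longrightarrow> y \<in> carrier (dual M) \<Longrightarrow> z \<in> carrier (dual M) \<Longrightarrow>
      x \<otimes>\<^bsub>dual M\<^esub> y \<otimes>\<^bsub>dual M\<^esub> z = x \<otimes>\<^bsub>dual M\<^esub> (y \<otimes>\<^bsub>dual M\<^esub> z)"
    by (auto simp: dual_def mult.assoc)
  show "\<And>x y. x \<in> carrier (dual M) \<Longrightarrow> y \<in> carrier (dual M) \<Longrightarrow>
      x \<otimes>\<^bsub>dual M\<^esub> y = y \<otimes>\<^bsub>dual M\<^esub> x"
    by (auto simp: dual_def mult.commute)
  show "\<And>x. x \<in> carrier (dual M) \<Longrightarrow> \<one>\<^bsub>dual M\<^esub> \<otimes>\<^bsub>dual M\<^esub> x = x"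
    by (auto simp: dual_def)
  fix x assume x: "x \<in> carrier (dual M)"
  have nz: "x a \<noteq> 0" for a
    using x by (cases "a \<in> carrier M") (auto simp: dual_def dual_chars_def)
  let ?y = "\<lambda>a. inverse (x a)"
  have "?y \<in> carrier (dual M)"
    using x by (auto simp: dual_def dual_chars_def norm_inverse)
  moreover have "?y \<otimes>\<^bsub>dual M\<^esub> x = \<one>\<^bsub>dual M\<^esub>"
    using nz by (auto simp: dual_def)
  ultimately show "\<exists>y\<in>carrier (dual M). y \<otimes>\<^bsub>dual M\<^esub> x = \<one>\<^bsub>dual M\<^esub>" by blast
qed

theorem mainTheorem9:
  fixes M :: "('a, 'b) monoid_scheme"
    and c :: "'a \<Rightarrow> complex"
    and i :: "('a \<Rightarrow> complex) \<Rightarrow> ('a \<Rightarrow> complex)"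
  assumes "comm_group M" and "finite (carrier M)"
    and "c \<in> carrier (dual M)" and "c \<otimes>\<^bsub>dual M\<^esub> c = \<one>\<^bsub>dual M\<^esub>"
    and "bij_betw i (carrier (dual M) - {c}) (carrier (dual M) - {\<one>\<^bsub>dual M\<^esub>})"
    and "\<forall>x \<in> carrier (dual M) - {c}. i x = x \<otimes>\<^bsub>dual M\<^esub> i (inv\<^bsub>dual M\<^esub> x)"
  shows "(\<forall>x \<in> Fset M. \<forall>y \<in> Fset M. Foplus M c i x y = Foplus M c i y x)
    \<and> (\<forall>x \<in> Fset M. \<forall>y \<in> Fset M. \<forall>z \<in> Fset M.
         Fmul M z (Foplus M c i x y) = Foplus M c i (Fmul M z x) (Fmul M z y))
    \<and> (\<forall>x \<in> Fset M. Foplus M c i x (Fmul M (Some c) x) = None)"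
proof -
  interpret D: comm_group "dual M" by (rule dual_comm_group)
  let ?G = "carrier (dual M)"
  have cG: "c \<in> ?G" and cc: "c \<otimes>\<^bsub>dual M\<^esub> c = \<one>\<^bsub>dual M\<^esub>" using assms by auto
  have iG: "\<And>t. t \<in> ?G \<Longrightarrow> t \<noteq> c \<Longrightarrow> i t \<in> ?G"
    using assms(5) unfolding bij_betw_def by auto
  have ih: "\<And>t. t \<in> ?G \<Longrightarrow> t \<noteq> c \<Longrightarrow> i t = t \<otimes>\<^bsub>dual M\<^esub> i (inv\<^bsub>dual M\<^esub> t)"
    using assms(6) by auto
  have cinv: "inv\<^bsub>dual M\<^esub> c = c" using cc cG by (metis D.inv_equality)
  have ceq: "x = c \<otimes>\<^bsub>dual M\<^esub> y \<longleftrightarrow> y = c \<otimes>\<^bsub>dual M\<^esub> x" if "x \<in> ?G" "y \<in> ?G" for x y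
    using that cG cc by (metis D.m_assoc D.l_one)
  have divc: "x \<otimes>\<^bsub>dual M\<^esub> inv\<^bsub>dual M\<^esub> y \<noteq> c" if "x \<in> ?G" "y \<in> ?G" "x \<noteq> c \<otimes>\<^bsub>dual M\<^esub> y" for x y
    using that cG by (metis D.inv_solve_right)
  have A: "Foplus M c i x y = Foplus M c i y x" if "x \<in> Fset M" "y \<in> Fset M" for x y
  proof (cases x)
    case None then show ?thesis by (cases y) auto
  next
    case (Some a)
    note a = this
    show ?thesis
    proof (cases y)
      case None then show ?thesis using a by simp
    next
      case (Some b)
      have aG: "a \<in> ?G" and bG: "b \<in> ?G" using that a Some by (auto simp: Fset_def)
      show ?thesis
      proof (cases "a = c \<otimes>\<^bsub>dual M\<^esub> b")
        case True then show ?thesis using a Some ceq[OF aG bG] by simp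
      next
        case False
        have F2: "b \<noteq> c \<otimes>\<^bsub>dual M\<^esub> a" using False ceq[OF aG bG] by simp
        let ?t = "a \<otimes>\<^bsub>dual M\<^esub> inv\<^bsub>dual M\<^esub> b"
        have tG: "?t \<in> ?G" using aG bG by simp
        have tc: "?t \<noteq> c" using divc[OF aG bG False] .
        have ti: "inv\<^bsub>dual M\<^esub> ?t = b \<otimes>\<^bsub>dual M\<^esub> inv\<^bsub>dual M\<^esub> a"
          using aG bG by (simp add: D.inv_mult_group D.m_comm)
        have tic: "inv\<^bsub>dual M\<^esub> ?t \<noteq> c" using divc[OF bG aG F2] ti by simp
        have jG: "i (inv\<^bsub>dual M\<^esub> ?t) \<in> ?G" using iG[OF _ tic] tG by simp
        have "a \<otimes>\<^bsub>dual M\<^esub> inv\<^bsub>dual M\<^esub> (i ?t)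
            = a \<otimes>\<^bsub>dual M\<^esub> inv\<^bsub>dual M\<^esub> (?t \<otimes>\<^bsub>dual M\<^esub> i (inv\<^bsub>dual M\<^esub> ?t))"
          using ih[OF tG tc] by simp
        also have "\<dots> = b \<otimes>\<^bsub>dual M\<^esub> inv\<^bsub>dual M\<^esub> (i (b \<otimes>\<^bsub>dual M\<^esub> inv\<^bsub>dual M\<^esub> a))"
          using aG bG jG ti
          by (simp add: D.inv_mult_group D.m_assoc[symmetric] D.m_comm D.m_lcomm)
        finally show ?thesis using a Some False F2 by simp
      qed
    qed
  qed
  have B: "Fmul M z (Foplus M c i x y) = Foplus M c i (Fmul M z x) (Fmul M z y)"
    if "x \<in> Fset M" "y \<in> Fset M" "z \<in> Fset M" for x y z
  proof (cases z)
    case None then show ?thesis by (cases x; cases y) auto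
  next
    case (Some w)
    have wG: "w \<in> ?G" using that Some by (auto simp: Fset_def)
    show ?thesis
    proof (cases x)
      case None then show ?thesis using Some by (cases y) auto
    next
      case xa: (Some a)
      show ?thesis
      proof (cases y)
        case None then show ?thesis using Some xa by simp
      next
        case yb: (Some b)
        have aG: "a \<in> ?G" and bG: "b \<in> ?G" using that xa yb by (auto simp: Fset_def)
        have e1: "(w \<otimes>\<^bsub>dual M\<^esub> a = c \<otimes>\<^bsub>dual M\<^esub> (w \<otimes>\<^bsub>dual M\<^esub> b)) = (a = c \<otimes>\<^bsub>dual M\<^esub> b)"
          using aG bG wG cG by (metis D.m_closed D.m_lcomm D.l_cancel)
        have e2: "(w \<otimes>\<^bsub>dual M\<^esub> a) \<otimes>\<^bsub>dual M\<^esub> inv\<^bsub>dual M\<^esub> (w \<otimes>\<^bsub>dual M\<^esub> b)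
           = a \<otimes>\<^bsub>dual M\<^esub> inv\<^bsub>dual M\<^esub> b"
          using aG bG wG by (simp add: D.inv_mult_group D.m_assoc D.m_lcomm D.m_comm)
        have e3: "w \<otimes>\<^bsub>dual M\<^esub> (a \<otimes>\<^bsub>dual M\<^esub> q) = (w \<otimes>\<^bsub>dual M\<^esub> a) \<otimes>\<^bsub>dual M\<^esub> q" for q
          by (simp add: dual_def mult.assoc)
        show ?thesis using Some xa yb e1 e2 e3 by simp
      qed
    qed
  qed
  have C: "Foplus M c i x (Fmul M (Some c) x) = None" if "x \<in> Fset M" for x
  proof (cases x)
    case None then show ?thesis by simp
  next
    case (Some a)
    have aG: "a \<in> ?G" using that Some by (auto simp: Fset_def)
    have "a = c \<otimes>\<^bsub>dual M\<^esub> (c \<otimes>\<^bsub>dual M\<^esub> a)"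
      using aG cG cc by (simp add: D.m_assoc[symmetric])
    then show ?thesis using Some by simp
  qed
  show ?thesis using A B C by blast
qed

end
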